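(* Let $k\ge1$, $m\ge1$, $h\ge0$ be fixed integers. For the random key graph $G(n,X_n,Y_n)$ with $X_n\ge2$ for all large $n$ and edge probability $q_n=\frac{\ln n+(k-1)\ln\ln n+\alpha_n}{n}$ with $\alpha_n=o(\ln n)$, let $N_i$ ($1\le i\le m$) be the set of nodes in $\{v_{m+1},\dots,v_n\}$ adjacent to $v_i$. Then $$\mathbb{P}\Big[\Big|\bigcup_{i=1}^m N_i\Big|\le hm-1\Big]=o\big((nq_n)^{hm}e^{-mnq_n}\big)\quad(n\to\infty).$$
   Context: The random key graph $G(n,X_n,Y_n)$ (with $1\le X_n\le Y_n$ integers depending on $n$) has node set $\{v_1,\dots,v_n\}$; each node $v_i$ is independently assigned a set $S_i$ of $X_n$ distinct objects chosen uniformly at random among all $X_n$-element subsets of a pool of $Y_n$ objects; an undirected edge joins $v_i$ and $v_j$ ($i\ne j$) iff $S_i\cap S_j\neq\emptyset$. The edge probability is $q_n=1-\binom{Y_n-X_n}{X_n}/\binom{Y_n}{X_n}$. *)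

theory Defs
  imports "HOL-Probability.Probability" "HOL-Library.Landau_Symbols"
begin

text \<open>Nodes v_1..v_n are represented by indices 0..n-1
  (v_i corresponds to index i-1).\<close>

definition key_rings :: "nat \<Rightarrow> nat \<Rightarrow> nat set set" where
  "key_rings X Y = {S. S \<subseteq> {..<Y} \<and> card S = X}"

definition rkg :: "nat \<Rightarrow> nat \<Rightarrow> nat \<Rightarrow> (nat \<Rightarrow> nat set) pmf" where
  "rkg n X Y = Pi_pmf {..<n} {} (\<lambda>_. pmf_of_set (key_rings X Y))"

definition rkg_adj :: "(nat \<Rightarrow> nat set) \<Rightarrow> nat \<Rightarrow> nat \<Rightarrow> bool" where
  "rkg_adj S i j \<longleftrightarrow> i \<noteq> j \<and> S i \<inter> S j \<noteq> {}"

definition rkg_edge_prob :: "nat \<Rightarrow> nat \<Rightarrow> real" where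
  "rkg_edge_prob X Y = 1 - real ((Y - X) choose X) / real (Y choose X)"

text \<open>N_i (1 \<le> i \<le> m): nodes among v_{m+1},...,v_n adjacent to v_i; with 0-based
  indices, node i-1 and nodes j with m \<le> j < n.\<close>
definition nbr_set :: "nat \<Rightarrow> nat \<Rightarrow> (nat \<Rightarrow> nat set) \<Rightarrow> nat \<Rightarrow> nat set" where
  "nbr_set n m S i = {j. m \<le> j \<and> j < n \<and> rkg_adj S (i - 1) j}"

end

theory Submission
  imports Defs "HOL-Real_Asymp.Real_Asymp"
begin


lemma key_rings_finite: "finite (key_rings X Y)"
  unfolding key_rings_def by (rule finite_subset[of _ "Pow {..<Y}"]) auto

lemma key_rings_card: "card (key_rings X Y) = Y choose X"
  unfolding key_rings_def using n_subsets[of "{..<Y}" X] by simp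

lemma key_rings_ne: "X \<le> Y \<Longrightarrow> key_rings X Y \<noteq> {}"
proof -
  assume "X \<le> Y"
  then have "{..<X} \<in> key_rings X Y" by (auto simp: key_rings_def)
  then show ?thesis by auto
qed

lemma key_rings_memD: "S \<in> key_rings X Y \<Longrightarrow> S \<subseteq> {..<Y} \<and> card S = X \<and> finite S"
  unfolding key_rings_def by (auto intro: finite_subset)

lemma avoid_card:
  assumes "T \<subseteq> {..<Y}"
  shows "card {S\<in>key_rings X Y. S \<inter> T = {}} = (Y - card T) choose X"
proof -
  have "{S\<in>key_rings X Y. S \<inter> T = {}} = {S. S \<subseteq> {..<Y} - T \<and> card S = X}"
    unfolding key_rings_def by auto
  moreover have "card ({..<Y} - T) = Y - card T"
    using assms by (simp add: card_Diff_subset finite_subset)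
  ultimately show ?thesis using n_subsets[of "{..<Y} - T" X] by simp
qed

lemma contain_card:
  assumes "A \<subseteq> {..<Y}" "card A \<le> X"
  shows "card {S\<in>key_rings X Y. A \<subseteq> S} = (Y - card A) choose (X - card A)"
proof -
  have fA: "finite A" using assms(1) finite_subset by blast
  have "bij_betw (\<lambda>S. S - A) {S\<in>key_rings X Y. A \<subseteq> S} {R. R \<subseteq> {..<Y} - A \<and> card R = X - card A}"
  proof (rule bij_betw_byWitness[where f' = "\<lambda>R. R \<union> A"])
    show "\<forall>a\<in>{S \<in> key_rings X Y. A \<subseteq> S}. a - A \<union> A = a" by auto
    show "\<forall>a'\<in>{R. R \<subseteq> {..<Y} - A \<and> card R = X - card A}. a' \<union> A - A = a'" by auto
    show "(\<lambda>S. S - A) ` {S \<in> key_rings X Y. A \<subseteq> S} \<subseteq> {R. R \<subseteq> {..<Y} - A \<and> card R = X - card A}"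
    proof (rule subsetI, elim imageE)
      fix S R assume S: "S \<in> {S \<in> key_rings X Y. A \<subseteq> S}" and R: "R = S - A"
      have "card (S - A) = X - card A" using S key_rings_memD[of S X Y] fA
        by (simp add: card_Diff_subset)
      then show "R \<in> {R. R \<subseteq> {..<Y} - A \<and> card R = X - card A}" using S R
        by (auto simp: key_rings_def)
    qed
    show "(\<lambda>R. R \<union> A) ` {R. R \<subseteq> {..<Y} - A \<and> card R = X - card A} \<subseteq> {S \<in> key_rings X Y. A \<subseteq> S}"
    proof safe
      fix R assume R: "R \<subseteq> {..<Y} - A" "card R = X - card A"
      have fR: "finite R" using R(1) finite_subset by blast
      have "card (R \<union> A) = X" using R fR fA assms(2)
        by (subst card_Un_disjoint) auto
      then show "R \<union> A \<in> key_rings X Y" using R assms(1) by (auto simp: key_rings_def)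
    qed
  qed
  then have "card {S\<in>key_rings X Y. A \<subseteq> S} = card {R. R \<subseteq> {..<Y} - A \<and> card R = X - card A}"
    by (rule bij_betw_same_card)
  also have "\<dots> = card ({..<Y} - A) choose (X - card A)"
    by (rule n_subsets) simp
  also have "card ({..<Y} - A) = Y - card A"
    using assms fA by (simp add: card_Diff_subset)
  finally show ?thesis .
qed

lemma choose_ratio:
  assumes "a \<le> X" "X \<le> Y" "0 < Y"
  shows "real ((Y - a) choose (X - a)) \<le> real (Y choose X) * (real X / real Y) ^ a"
  using assms(1)
proof (induction a)
  case 0 then show ?case by simp
next
  case (Suc a)
  define Y' where "Y' = Y - a"
  define X' where "X' = X - a"
  have X'pos: "0 < X'" using Suc.prems X'_def by simp
  have XY': "X' \<le> Y'" using assms Suc.prems X'_def Y'_def by simp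
  have eq: "real X' * real (Y' choose X') = real Y' * real ((Y' - 1) choose (X' - 1))"
    using times_binomial_minus1_eq[OF X'pos, of Y'] by (metis of_nat_mult)
  have Y'pos: "0 < real Y'" using X'pos XY' by simp
  have frac: "real X' / real Y' \<le> real X / real Y"
  proof -
    have "real a * real X \<le> real a * real Y" using assms by (intro mult_left_mono) auto
    then show ?thesis using assms Suc.prems unfolding X'_def Y'_def
      by (simp add: divide_simps of_nat_diff algebra_simps)
  qed
  have "real ((Y - Suc a) choose (X - Suc a)) = real ((Y' - 1) choose (X' - 1))"
    by (simp add: X'_def Y'_def)
  also have "\<dots> = real (Y' choose X') * (real X' / real Y')"
    using eq Y'pos by (simp add: field_simps)
  also have "\<dots> \<le> real (Y choose X) * (real X / real Y) ^ a * (real X / real Y)"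
    apply (rule mult_mono)
    using Suc.IH Suc.prems frac by (auto simp: X'_def Y'_def)
  finally show ?case by (simp add: ac_simps)
qed

lemma sum_Pow_power:
  fixes c :: real
  assumes "finite B"
  shows "(\<Sum>A\<in>Pow B. c ^ card A) = (1 + c) ^ card B"
  using assms
proof (induction rule: finite_induct)
  case empty then show ?case by simp
next
  case (insert b B)
  have disj: "Pow B \<inter> insert b ` Pow B = {}" using insert.hyps by auto
  have inj: "inj_on (insert b) (Pow B)" using insert.hyps
    by (intro inj_onI) (metis Pow_iff insert_absorb insert_ident subsetD)
  have "(\<Sum>A\<in>Pow (insert b B). c ^ card A) = (\<Sum>A\<in>Pow B. c ^ card A) + (\<Sum>A\<in>insert b ` Pow B. c ^ card A)"
    using insert.hyps disj by (simp add: Pow_insert sum.union_disjoint)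
  also have "(\<Sum>A\<in>insert b ` Pow B. c ^ card A) = (\<Sum>A\<in>Pow B. c ^ card (insert b A))"
    using inj by (simp add: sum.reindex)
  also have "\<dots> = (\<Sum>A\<in>Pow B. c * c ^ card A)"
  proof (rule sum.cong)
    fix A assume "A \<in> Pow B"
    then have "finite A" "b \<notin> A" using insert.hyps finite_subset by auto
    then show "c ^ card (insert b A) = c * c ^ card A" by simp
  qed simp
  finally show ?case using insert.IH insert.hyps
    by (simp add: sum_distrib_left[symmetric] algebra_simps)
qed



lemma contain_le:
  assumes "X \<le> Y" "0 < Y"
  shows "real (card {S\<in>key_rings X Y. A \<subseteq> S}) \<le> real (card (key_rings X Y)) * (real X / real Y) ^ card A"
proof (cases "A \<subseteq> {..<Y} \<and> card A \<le> X")
  case True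
  then show ?thesis using contain_card[of A Y X] choose_ratio[of "card A" X Y] assms
    by (simp add: key_rings_card)
next
  case False
  have "{S\<in>key_rings X Y. A \<subseteq> S} = {}"
  proof (rule ccontr)
    assume "{S\<in>key_rings X Y. A \<subseteq> S} \<noteq> {}"
    then obtain S where S: "S \<in> key_rings X Y" "A \<subseteq> S" by auto
    then have "A \<subseteq> {..<Y}" "card A \<le> X" using key_rings_memD[OF S(1)]
      by (auto intro: card_mono)
    then show False using False by simp
  qed
  then have "card {S\<in>key_rings X Y. A \<subseteq> S} = 0" by (simp only: card.empty)
  then show ?thesis by simp
qed

lemma step_sum:
  fixes \<rho> :: real
  assumes "finite B" "0 < \<rho>" "\<rho> \<le> 1" "X \<le> Y" "0 < Y"
  shows "(\<Sum>y\<in>key_rings X Y. \<rho> ^ card (B \<union> y))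
     \<le> real (card (key_rings X Y)) * \<rho> ^ (card B + X) * (1 + (1/\<rho> - 1) * (real X / real Y)) ^ card B"
proof -
  define K where "K = key_rings X Y"
  define w where "w = 1/\<rho> - 1"
  have w0: "0 \<le> w" using assms by (simp add: w_def field_simps)
  have fK: "finite K" by (simp add: K_def key_rings_finite)
  have fPB: "finite (Pow B)" using assms(1) by simp
  have eq1: "\<rho> ^ card (B \<union> y) = \<rho> ^ (card B + X) * (\<Sum>A\<in>{A\<in>Pow B. A \<subseteq> y}. w ^ card A)"
    if y: "y \<in> K" for y
  proof -
    have fy: "finite y" "card y = X" using key_rings_memD y K_def by auto
    have cu: "card B + X = card (B \<union> y) + card (B \<inter> y)"
      using card_Un_Int[OF assms(1) fy(1)] fy(2) by simp
    have "{A\<in>Pow B. A \<subseteq> y} = Pow (B \<inter> y)" by auto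
    then have "(\<Sum>A\<in>{A\<in>Pow B. A \<subseteq> y}. w ^ card A) = (1 + w) ^ card (B \<inter> y)"
      using sum_Pow_power[of "B \<inter> y" w] assms(1) by simp
    also have "1 + w = 1 / \<rho>" by (simp add: w_def)
    finally have "\<rho> ^ (card B + X) * (\<Sum>A\<in>{A\<in>Pow B. A \<subseteq> y}. w ^ card A)
        = \<rho> ^ (card (B \<union> y)) * (\<rho> ^ card (B \<inter> y) * (1/\<rho>) ^ card (B \<inter> y))"
      by (simp add: cu power_add)
    also have "\<rho> ^ card (B \<inter> y) * (1/\<rho>) ^ card (B \<inter> y) = 1"
      using assms(2) by (simp add: power_mult_distrib[symmetric])
    finally show ?thesis by simp
  qed
  have "(\<Sum>y\<in>K. \<rho> ^ card (B \<union> y)) = \<rho> ^ (card B + X) * (\<Sum>y\<in>K. \<Sum>A\<in>{A\<in>Pow B. A \<subseteq> y}. w ^ card A)"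
    by (simp add: eq1 sum_distrib_left)
  also have "(\<Sum>y\<in>K. \<Sum>A\<in>{A\<in>Pow B. A \<subseteq> y}. w ^ card A) = (\<Sum>A\<in>Pow B. \<Sum>y | y \<in> K \<and> A \<subseteq> y. w ^ card A)"
    by (rule sum.swap_restrict[OF fK fPB])
  also have "\<dots> = (\<Sum>A\<in>Pow B. real (card {y\<in>K. A \<subseteq> y}) * w ^ card A)"
    by simp
  also have "\<dots> \<le> (\<Sum>A\<in>Pow B. real (card K) * (real X / real Y) ^ card A * w ^ card A)"
    by (intro sum_mono mult_right_mono) (use contain_le[OF assms(4,5)] w0 K_def in auto)
  also have "\<dots> = real (card K) * (\<Sum>A\<in>Pow B. (w * (real X / real Y)) ^ card A)"
    by (simp add: sum_distrib_left power_mult_distrib power_divide mult_ac)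
  also have "\<dots> = real (card K) * (1 + w * (real X / real Y)) ^ card B"
    by (simp add: sum_Pow_power assms(1))
  finally show ?thesis
    using assms(2) by (simp add: K_def w_def mult_ac mult_left_mono)
qed



lemma nn_integral_pmf_of_set_real:
  assumes "finite S" "S \<noteq> {}" "\<And>x. x \<in> S \<Longrightarrow> 0 \<le> g x"
  shows "(\<integral>\<^sup>+x. ennreal (g x) \<partial>pmf_of_set S) = ennreal ((\<Sum>x\<in>S. g x) / real (card S))"
proof -
  have "(\<integral>\<^sup>+x. ennreal (g x) \<partial>pmf_of_set S) = (\<Sum>x\<in>S. ennreal (g x)) / of_nat (card S)"
    using assms by (simp add: nn_integral_pmf_of_set)
  also have "\<dots> = ennreal (\<Sum>x\<in>S. g x) / ennreal (real (card S))"
    using assms by (simp add: sum_ennreal ennreal_of_nat_eq_real_of_nat)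
  also have "\<dots> = ennreal ((\<Sum>x\<in>S. g x) / real (card S))"
    using assms by (intro divide_ennreal) (auto intro: sum_nonneg simp: card_gt_0_iff)
  finally show ?thesis .
qed

lemma set_pmf_U: "X \<le> Y \<Longrightarrow> set_pmf (pmf_of_set (key_rings X Y)) = key_rings X Y"
  by (simp add: key_rings_finite key_rings_ne)

lemma step_int:
  fixes \<rho> :: real
  assumes "finite B" "0 < \<rho>" "\<rho> \<le> 1" "X \<le> Y" "0 < Y"
  shows "(\<integral>\<^sup>+y. ennreal (\<rho> ^ card (B \<union> y)) \<partial>pmf_of_set (key_rings X Y))
     \<le> ennreal (\<rho> ^ (card B + X) * (1 + (1/\<rho> - 1) * (real X / real Y)) ^ card B)"
proof -
  define K where "K = key_rings X Y"
  have cK: "0 < real (card K)" using key_rings_finite key_rings_ne[OF assms(4)]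
    by (simp add: K_def card_gt_0_iff)
  have "(\<integral>\<^sup>+y. ennreal (\<rho> ^ card (B \<union> y)) \<partial>pmf_of_set K) = ennreal ((\<Sum>y\<in>K. \<rho> ^ card (B \<union> y)) / real (card K))"
    using assms by (intro nn_integral_pmf_of_set_real) (auto simp: K_def key_rings_finite key_rings_ne)
  also have "\<dots> \<le> ennreal (\<rho> ^ (card B + X) * (1 + (1/\<rho> - 1) * (real X / real Y)) ^ card B)"
    using step_sum[OF assms] cK by (intro ennreal_leI) (simp add: K_def divide_simps mult_ac)
  finally show ?thesis by (simp add: K_def)
qed

lemma overlap:
  fixes \<rho> :: real
  assumes "0 < \<rho>" "\<rho> \<le> 1" "X \<le> Y" "0 < Y"
  shows "finite B \<Longrightarrow> (\<integral>\<^sup>+f. ennreal (\<rho> ^ card (B \<union> (\<Union>i<j. f i))) \<partial>Pi_pmf {..<j} {} (\<lambda>_. pmf_of_set (key_rings X Y)))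
     \<le> ennreal (\<rho> ^ (card B + j * X) * (1 + (1/\<rho> - 1) * (real X / real Y)) ^ ((card B + j * X) * j))"
proof (induction j arbitrary: B)
  case 0
  then show ?case using assms by simp
next
  case (Suc j)
  define U where "U = pmf_of_set (key_rings X Y)"
  define \<gamma> where "\<gamma> = 1 + (1/\<rho> - 1) * (real X / real Y)"
  have g1: "1 \<le> \<gamma>" using assms by (simp add: \<gamma>_def field_simps mult_left_le_one_le)
  define c where "c = \<rho> ^ (j * X) * \<gamma> ^ ((card B + Suc j * X) * j)"
  have c0: "0 \<le> c" using assms g1 by (simp add: c_def)
  have "Pi_pmf {..<Suc j} {} (\<lambda>_. U) = Pi_pmf (insert j {..<j}) {} (\<lambda>_. U)"
    by (simp add: lessThan_Suc)
  also have "\<dots> = map_pmf (\<lambda>(y,f). f(j:=y)) (pair_pmf U (Pi_pmf {..<j} {} (\<lambda>_. U)))"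
    by (rule Pi_pmf_insert) auto
  finally have PI: "Pi_pmf {..<Suc j} {} (\<lambda>_. U) = \<dots>" .
  have un: "(\<Union>i<Suc j. (f(j:=y)) i) = y \<union> (\<Union>i<j. f i)" for f :: "nat \<Rightarrow> nat set" and y
    by (auto simp: lessThan_Suc)
  have "(\<integral>\<^sup>+f. ennreal (\<rho> ^ card (B \<union> (\<Union>i<Suc j. f i))) \<partial>Pi_pmf {..<Suc j} {} (\<lambda>_. U))
      = (\<integral>\<^sup>+y. \<integral>\<^sup>+f. ennreal (\<rho> ^ card ((B \<union> y) \<union> (\<Union>i<j. f i))) \<partial>Pi_pmf {..<j} {} (\<lambda>_. U) \<partial>U)"
    unfolding PI nn_integral_map_pmf nn_integral_pair_pmf' by (simp only: prod.case un Un_assoc)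
  also have "\<dots> \<le> (\<integral>\<^sup>+y. ennreal (\<rho> ^ (card (B \<union> y) + j * X) * \<gamma> ^ ((card (B \<union> y) + j * X) * j)) \<partial>U)"
  proof (rule nn_integral_mono_AE, rule AE_pmfI)
    fix y assume "y \<in> set_pmf U"
    then have "finite y" using set_pmf_U[OF assms(3)] key_rings_memD by (auto simp: U_def)
    then show "(\<integral>\<^sup>+f. ennreal (\<rho> ^ card ((B \<union> y) \<union> (\<Union>i<j. f i))) \<partial>Pi_pmf {..<j} {} (\<lambda>_. U))
        \<le> ennreal (\<rho> ^ (card (B \<union> y) + j * X) * \<gamma> ^ ((card (B \<union> y) + j * X) * j))"
      using Suc.IH[of "B \<union> y"] Suc.prems by (simp add: U_def \<gamma>_def)
  qed
  also have "\<dots> \<le> (\<integral>\<^sup>+y. ennreal c * ennreal (\<rho> ^ card (B \<union> y)) \<partial>U)"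
  proof (rule nn_integral_mono_AE, rule AE_pmfI)
    fix y assume "y \<in> set_pmf U"
    then have y: "finite y" "card y = X" using set_pmf_U[OF assms(3)] key_rings_memD by (auto simp: U_def)
    have cb: "card (B \<union> y) \<le> card B + X" using card_Un_le[of B y] y by simp
    have "\<rho> ^ (card (B \<union> y) + j * X) * \<gamma> ^ ((card (B \<union> y) + j * X) * j)
        \<le> \<rho> ^ (card (B \<union> y) + j * X) * \<gamma> ^ ((card B + Suc j * X) * j)"
      using assms g1 cb by (intro mult_left_mono power_increasing) auto
    also have "\<dots> = c * \<rho> ^ card (B \<union> y)" by (simp add: c_def power_add mult_ac)
    finally show "ennreal (\<rho> ^ (card (B \<union> y) + j * X) * \<gamma> ^ ((card (B \<union> y) + j * X) * j))
        \<le> ennreal c * ennreal (\<rho> ^ card (B \<union> y))"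
      using assms by (simp add: ennreal_mult''[symmetric] ennreal_leI)
  qed
  also have "\<dots> = ennreal c * (\<integral>\<^sup>+y. ennreal (\<rho> ^ card (B \<union> y)) \<partial>U)"
    by (rule nn_integral_cmult) simp
  also have "\<dots> \<le> ennreal c * ennreal (\<rho> ^ (card B + X) * \<gamma> ^ card B)"
  proof (rule mult_left_mono)
    show "(\<integral>\<^sup>+y. ennreal (\<rho> ^ card (B \<union> y)) \<partial>U) \<le> ennreal (\<rho> ^ (card B + X) * \<gamma> ^ card B)"
      unfolding U_def \<gamma>_def by (rule step_int[OF Suc.prems assms])
  qed simp
  also have "\<dots> = ennreal (c * (\<rho> ^ (card B + X) * \<gamma> ^ card B))"
    using assms g1 by (simp add: ennreal_mult'')
  also have "\<dots> \<le> ennreal (\<rho> ^ (card B + Suc j * X) * \<gamma> ^ ((card B + Suc j * X) * Suc j))"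
  proof (rule ennreal_leI)
    have "\<gamma> ^ ((card B + Suc j * X) * j) * \<gamma> ^ card B \<le> \<gamma> ^ ((card B + Suc j * X) * Suc j)"
      unfolding power_add[symmetric] using g1 by (intro power_increasing) auto
    then have "\<rho> ^ (card B + Suc j * X) * (\<gamma> ^ ((card B + Suc j * X) * j) * \<gamma> ^ card B)
       \<le> \<rho> ^ (card B + Suc j * X) * \<gamma> ^ ((card B + Suc j * X) * Suc j)"
      using assms by (intro mult_left_mono) auto
    then show "c * (\<rho> ^ (card B + X) * \<gamma> ^ card B) \<le> \<rho> ^ (card B + Suc j * X) * \<gamma> ^ ((card B + Suc j * X) * Suc j)"
      by (simp add: c_def power_add mult_ac)
  qed
  finally show ?case by (simp add: U_def \<gamma>_def)
qed



definition Bsum :: "nat \<Rightarrow> nat \<Rightarrow> real \<Rightarrow> real" where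
  "Bsum N r p = (\<Sum>a\<le>r. real (N choose a) * p ^ a * (1 - p) ^ (N - a))"

lemma map_bool_bernoulli:
  fixes P :: "'a \<Rightarrow> bool"
  shows "map_pmf P M = bernoulli_pmf (measure_pmf.prob M {x. P x})"
proof (rule pmf_eqI)
  fix b :: bool
  have p0: "0 \<le> measure_pmf.prob M {x. P x}" "measure_pmf.prob M {x. P x} \<le> 1" by auto
  show "pmf (map_pmf P M) b = pmf (bernoulli_pmf (measure_pmf.prob M {x. P x})) b"
  proof (cases b)
    case True
    then show ?thesis using p0 by (simp add: pmf_map vimage_def)
  next
    case False
    have "measure_pmf.prob M {x. \<not> P x} = measure_pmf.prob M (space (measure_pmf M) - {x. P x})"
      by (simp add: set_diff_eq Collect_neg_eq)
    also have "\<dots> = 1 - measure_pmf.prob M {x. P x}" by (rule measure_pmf.prob_compl) simp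
    finally show ?thesis using p0 False by (simp add: pmf_map vimage_def)
  qed
qed

lemma slice_prob:
  fixes T :: "nat set" and U :: "nat set pmf"
  assumes "finite J" "card J = N"
  shows "measure_pmf.prob (Pi_pmf J {} (\<lambda>_. U)) {g. card {j\<in>J. g j \<inter> T \<noteq> {}} \<le> r}
         = Bsum N r (measure_pmf.prob U {s. s \<inter> T \<noteq> {}})"
proof -
  define p where "p = measure_pmf.prob U {s. s \<inter> T \<noteq> {}}"
  have p01: "p \<in> {0..1}" by (auto simp: p_def)
  have "map_pmf (\<lambda>g. card {j\<in>J. g j \<inter> T \<noteq> {}}) (Pi_pmf J {} (\<lambda>_. U))
      = map_pmf (\<lambda>b. card {j\<in>J. b j}) (map_pmf (\<lambda>g. (\<lambda>s. s \<inter> T \<noteq> {}) \<circ> g) (Pi_pmf J {} (\<lambda>_. U)))"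
    by (simp add: map_pmf_comp o_def)
  also have "map_pmf (\<lambda>g. (\<lambda>s. s \<inter> T \<noteq> {}) \<circ> g) (Pi_pmf J {} (\<lambda>_. U))
      = Pi_pmf J False (\<lambda>_. map_pmf (\<lambda>s. s \<inter> T \<noteq> {}) U)"
    by (rule Pi_pmf_map[symmetric]) (use assms in auto)
  also have "map_pmf (\<lambda>s. s \<inter> T \<noteq> {}) U = bernoulli_pmf p"
    unfolding p_def by (rule map_bool_bernoulli)
  also have "map_pmf (\<lambda>b. card {j\<in>J. b j}) (Pi_pmf J False (\<lambda>_. bernoulli_pmf p)) = binomial_pmf N p"
    by (rule binomial_pmf_altdef'[symmetric]) (use assms p01 in auto)
  finally have eq: "map_pmf (\<lambda>g. card {j\<in>J. g j \<inter> T \<noteq> {}}) (Pi_pmf J {} (\<lambda>_. U)) = binomial_pmf N p" .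
  have "measure_pmf.prob (Pi_pmf J {} (\<lambda>_. U)) {g. card {j\<in>J. g j \<inter> T \<noteq> {}} \<le> r}
     = measure_pmf.prob (map_pmf (\<lambda>g. card {j\<in>J. g j \<inter> T \<noteq> {}}) (Pi_pmf J {} (\<lambda>_. U))) {..r}"
    by (simp add: vimage_def)
  also have "\<dots> = measure_pmf.prob (binomial_pmf N p) {..r}" by (simp only: eq)
  also have "\<dots> = (\<Sum>a\<le>r. pmf (binomial_pmf N p) a)" by (simp add: measure_measure_pmf_finite)
  also have "\<dots> = Bsum N r p" using p01 by (simp add: Bsum_def pmf_binomial)
  finally show ?thesis by (simp add: p_def)
qed

lemma union_nbr:
  assumes "S = (\<lambda>x. if x \<in> {..<m} then f x else g x)"
  shows "(\<Union>i\<in>{1..m}. nbr_set n m S i) = {j\<in>{m..<n}. g j \<inter> (\<Union>i<m. f i) \<noteq> {}}"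
proof (intro equalityI subsetI)
  fix j assume "j \<in> (\<Union>i\<in>{1..m}. nbr_set n m S i)"
  then obtain i where "i \<in> {1..m}" "j \<in> nbr_set n m S i" by blast
  then have i: "i \<in> {1..m}" "m \<le> j" "j < n" "S (i - 1) \<inter> S j \<noteq> {}"
    by (auto simp: nbr_set_def rkg_adj_def)
  have im: "i - 1 < m" using i by auto
  then have "f (i - 1) \<inter> g j \<noteq> {}" "i - 1 < m" using i assms by auto
  then show "j \<in> {j\<in>{m..<n}. g j \<inter> (\<Union>i<m. f i) \<noteq> {}}" using i by auto
next
  fix j assume "j \<in> {j\<in>{m..<n}. g j \<inter> (\<Union>i<m. f i) \<noteq> {}}"
  then obtain i where i: "i < m" "g j \<inter> f i \<noteq> {}" "m \<le> j" "j < n" by auto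
  then have "j \<in> nbr_set n m S (Suc i)" using assms by (auto simp: nbr_set_def rkg_adj_def)
  moreover have "Suc i \<in> {1..m}" using i by auto
  ultimately show "j \<in> (\<Union>i\<in>{1..m}. nbr_set n m S i)" by blast
qed

lemma decomp:
  assumes "m \<le> n"
  shows "emeasure (rkg n X Y) {S. card (\<Union>i\<in>{1..m}. nbr_set n m S i) \<le> r}
    = (\<integral>\<^sup>+f. ennreal (Bsum (n - m) r (measure_pmf.prob (pmf_of_set (key_rings X Y)) {s. s \<inter> (\<Union>i<m. f i) \<noteq> {}}))
         \<partial>Pi_pmf {..<m} {} (\<lambda>_. pmf_of_set (key_rings X Y)))"
proof -
  define U where "U = pmf_of_set (key_rings X Y)"
  define A where "A = Pi_pmf {..<m} {} (\<lambda>_. U)"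
  define B where "B = Pi_pmf {m..<n} {} (\<lambda>_. U)"
  define h where "h = (\<lambda>(f::nat \<Rightarrow> nat set, g::nat \<Rightarrow> nat set) x. if x \<in> {..<m} then f x else g x)"
  define E where "E = {S. card (\<Union>i\<in>{1..m}. nbr_set n m S i) \<le> r}"
  have "{..<n} = {..<m} \<union> {m..<n}" using assms by auto
  then have "rkg n X Y = Pi_pmf ({..<m} \<union> {m..<n}) {} (\<lambda>_. U)" by (simp add: rkg_def U_def)
  also have "\<dots> = map_pmf h (pair_pmf A B)"
    unfolding h_def A_def B_def by (rule Pi_pmf_union) auto
  finally have R: "rkg n X Y = map_pmf h (pair_pmf A B)" .
  have "emeasure (rkg n X Y) E = emeasure (pair_pmf A B) (h -` E)" by (simp add: R)
  also have "\<dots> = (\<integral>\<^sup>+x. indicator (h -` E) x \<partial>pair_pmf A B)"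
    by (rule nn_integral_indicator[symmetric]) simp
  also have "\<dots> = (\<integral>\<^sup>+f. \<integral>\<^sup>+g. indicator (h -` E) (f, g) \<partial>B \<partial>A)"
    by (rule nn_integral_pair_pmf')
  also have "\<dots> = (\<integral>\<^sup>+f. emeasure B {g. card {j\<in>{m..<n}. g j \<inter> (\<Union>i<m. f i) \<noteq> {}} \<le> r} \<partial>A)"
  proof (rule nn_integral_cong)
    fix f
    have "(\<lambda>g. indicator (h -` E) (f, g) :: ennreal) = indicator {g. card {j\<in>{m..<n}. g j \<inter> (\<Union>i<m. f i) \<noteq> {}} \<le> r}"
    proof (rule ext)
      fix g
      have "(\<Union>i\<in>{1..m}. nbr_set n m (h (f, g)) i) = {j\<in>{m..<n}. g j \<inter> (\<Union>i<m. f i) \<noteq> {}}"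
        by (rule union_nbr) (simp add: h_def)
      then show "indicator (h -` E) (f, g) = (indicator {g. card {j\<in>{m..<n}. g j \<inter> (\<Union>i<m. f i) \<noteq> {}} \<le> r} g :: ennreal)"
        by (simp add: indicator_def E_def)
    qed
    then show "(\<integral>\<^sup>+g. indicator (h -` E) (f, g) \<partial>B) = emeasure B {g. card {j\<in>{m..<n}. g j \<inter> (\<Union>i<m. f i) \<noteq> {}} \<le> r}"
      by (simp add: nn_integral_indicator)
  qed
  also have "\<dots> = (\<integral>\<^sup>+f. ennreal (Bsum (n - m) r (measure_pmf.prob U {s. s \<inter> (\<Union>i<m. f i) \<noteq> {}})) \<partial>A)"
  proof (rule nn_integral_cong)
    fix f
    show "emeasure B {g. card {j\<in>{m..<n}. g j \<inter> (\<Union>i<m. f i) \<noteq> {}} \<le> r} = ennreal (Bsum (n - m) r (measure_pmf.prob U {s. s \<inter> (\<Union>i<m. f i) \<noteq> {}}))"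
      unfolding B_def measure_pmf.emeasure_eq_measure by (subst slice_prob) auto
  qed
  finally show ?thesis by (simp add: E_def A_def U_def)
qed



definition Hs :: "nat \<Rightarrow> nat \<Rightarrow> real" where
  "Hs X Y = (\<Sum>i<X. 1 / (real Y - real i))"

lemma binom_prod: "real (n choose k) = (\<Prod>i<k. (real n - real i) / (real k - real i))"
  by (simp add: binomial_gbinomial gbinomial_altdef_of_nat atLeast0LessThan of_nat_diff)

lemma avoid_exp:
  assumes "t \<le> Y" "X \<le> Y"
  shows "real ((Y - t) choose X) \<le> real (Y choose X) * exp (- real t * Hs X Y)"
proof (cases "Y - t < X")
  case True
  then have "(Y - t) choose X = 0" by (simp add: binomial_eq_0)
  then have z: "real ((Y - t) choose X) = 0" by simp
  show ?thesis unfolding z by simp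
next
  case False
  have eq: "real ((Y - t) choose X) = real (Y choose X) * (\<Prod>i<X. (real Y - real t - real i) / (real Y - real i))"
  proof -
    have "real ((Y - t) choose X) = (\<Prod>i<X. ((real Y - real i) / (real X - real i)) * ((real Y - real t - real i) / (real Y - real i)))"
      unfolding binom_prod
    proof (rule prod.cong)
      fix i assume "i \<in> {..<X}"
      then have "real Y - real i \<noteq> 0" "real X - real i \<noteq> 0" using assms by auto
      moreover have "real (Y - t) - real i = real Y - real t - real i" using assms by (simp add: of_nat_diff)
      moreover have "\<And>a b c :: real. a \<noteq> 0 \<Longrightarrow> c / b = a / b * (c / a)" by simp
      ultimately show "(real (Y - t) - real i) / (real X - real i) = (real Y - real i) / (real X - real i) * ((real Y - real t - real i) / (real Y - real i))"
        by metis
    qed simp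
    also have "\<dots> = real (Y choose X) * (\<Prod>i<X. (real Y - real t - real i) / (real Y - real i))"
      by (simp only: prod.distrib binom_prod)
    finally show ?thesis .
  qed
  have "(\<Prod>i<X. (real Y - real t - real i) / (real Y - real i)) \<le> (\<Prod>i<X. exp (- real t * (1 / (real Y - real i))))"
  proof (rule prod_mono, safe)
    fix i assume i: "i < X"
    have pos: "real Y - real i > 0" using i assms by auto
    have nn: "real Y - real t - real i \<ge> 0" using i False assms by linarith
    show "0 \<le> (real Y - real t - real i) / (real Y - real i)" using pos nn by simp
    have "(real Y - real t - real i) / (real Y - real i) = 1 + (- real t * (1 / (real Y - real i)))"
      using pos by (simp add: field_simps)
    also have "\<dots> \<le> exp (- real t * (1 / (real Y - real i)))" by (rule exp_ge_add_one_self)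
    finally show "(real Y - real t - real i) / (real Y - real i) \<le> exp (- real t * (1 / (real Y - real i)))" .
  qed
  also have "\<dots> = exp (- real t * Hs X Y)"
    by (simp add: Hs_def exp_sum[symmetric] sum_distrib_left)
  finally show ?thesis unfolding eq by (intro mult_left_mono) auto
qed

lemma Hs_ge: "X \<le> Y \<Longrightarrow> real X / real Y \<le> Hs X Y"
proof -
  assume XY: "X \<le> Y"
  have "real X / real Y = (\<Sum>i<X. 1 / real Y)" by simp
  also have "\<dots> \<le> Hs X Y" unfolding Hs_def
  proof (rule sum_mono)
    fix i assume "i \<in> {..<X}"
    then have "0 < real Y - real i" "real Y - real i \<le> real Y" using XY by auto
    then show "1 / real Y \<le> 1 / (real Y - real i)" by (simp add: frac_le)
  qed
  finally show ?thesis .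
qed

lemma Hs_le: "X < Y \<Longrightarrow> Hs X Y \<le> real X / (real Y - real X)"
proof -
  assume XY: "X < Y"
  have "Hs X Y \<le> (\<Sum>i<X. 1 / (real Y - real X))" unfolding Hs_def
  proof (rule sum_mono)
    fix i assume "i \<in> {..<X}"
    then have "0 < real Y - real X" "real Y - real X \<le> real Y - real i" using XY by auto
    then show "1 / (real Y - real i) \<le> 1 / (real Y - real X)" by (simp add: frac_le)
  qed
  then show ?thesis by simp
qed




lemma meet_le:
  assumes "T \<subseteq> {..<Y}" "X \<le> Y" "0 < Y"
  shows "measure_pmf.prob (pmf_of_set (key_rings X Y)) {s. s \<inter> T \<noteq> {}} \<le> real (card T) * (real X / real Y)"
proof -
  define K where "K = key_rings X Y"
  have fK: "finite K" "K \<noteq> {}" using key_rings_finite key_rings_ne assms by (auto simp: K_def)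
  have cK: "0 < real (card K)" using fK by (simp add: card_gt_0_iff)
  have fT: "finite T" using assms(1) finite_subset by blast
  have "{s\<in>K. s \<inter> T \<noteq> {}} = (\<Union>x\<in>T. {s\<in>K. {x} \<subseteq> s})" by auto
  then have "card {s\<in>K. s \<inter> T \<noteq> {}} \<le> (\<Sum>x\<in>T. card {s\<in>K. {x} \<subseteq> s})"
    using card_UN_le[OF fT, of "\<lambda>x. {s\<in>K. {x} \<subseteq> s}"] by simp
  then have "real (card {s\<in>K. s \<inter> T \<noteq> {}}) \<le> real (\<Sum>x\<in>T. card {s\<in>K. {x} \<subseteq> s})"
    by (simp only: of_nat_le_iff)
  also have "\<dots> = (\<Sum>x\<in>T. real (card {s\<in>K. {x} \<subseteq> s}))" by (rule of_nat_sum)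
  also have "\<dots> \<le> (\<Sum>x\<in>T. real (card K) * (real X / real Y))"
  proof (rule sum_mono)
    fix x
    show "real (card {s\<in>K. {x} \<subseteq> s}) \<le> real (card K) * (real X / real Y)"
      using contain_le[OF assms(2,3), of "{x}"] by (simp add: K_def)
  qed
  also have "\<dots> = real (card T) * real (card K) * (real X / real Y)" by simp
  finally have c: "real (card {s\<in>K. s \<inter> T \<noteq> {}}) \<le> real (card T) * real (card K) * (real X / real Y)" .
  have "measure_pmf.prob (pmf_of_set K) {s. s \<inter> T \<noteq> {}} = real (card (K \<inter> {s. s \<inter> T \<noteq> {}})) / real (card K)"
    using fK by (simp add: measure_pmf_of_set)
  also have "K \<inter> {s. s \<inter> T \<noteq> {}} = {s\<in>K. s \<inter> T \<noteq> {}}" by auto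
  also have "real (card {s\<in>K. s \<inter> T \<noteq> {}}) / real (card K) \<le> real (card T) * real (card K) * (real X / real Y) / real (card K)"
    using c cK by (intro divide_right_mono) auto
  also have "\<dots> = real (card T) * (real X / real Y)" using cK by simp
  finally show ?thesis by (simp add: K_def)
qed


lemma avoid_prob:
  assumes "T \<subseteq> {..<Y}" "X \<le> Y"
  shows "1 - measure_pmf.prob (pmf_of_set (key_rings X Y)) {s. s \<inter> T \<noteq> {}} = real ((Y - card T) choose X) / real (Y choose X)"
proof -
  define K where "K = key_rings X Y"
  define M where "M = pmf_of_set K"
  have fK: "finite K" "K \<noteq> {}" using key_rings_finite key_rings_ne assms by (auto simp: K_def)
  have "1 - measure_pmf.prob M {s. s \<inter> T \<noteq> {}} = measure_pmf.prob M (space (measure_pmf M) - {s. s \<inter> T \<noteq> {}})"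
    by (rule measure_pmf.prob_compl[symmetric]) simp
  also have "space (measure_pmf M) - {s. s \<inter> T \<noteq> {}} = {s. s \<inter> T = {}}" by auto
  also have "measure_pmf.prob M {s. s \<inter> T = {}} = real (card (K \<inter> {s. s \<inter> T = {}})) / real (card K)"
    using fK by (simp add: M_def measure_pmf_of_set)
  also have "K \<inter> {s. s \<inter> T = {}} = {s\<in>K. s \<inter> T = {}}" by auto
  finally show ?thesis using avoid_card[OF assms(1), of X] by (simp add: K_def M_def key_rings_card)
qed



lemma Bsum_le:
  assumes "r \<le> N" "0 \<le> p" "p \<le> 1"
  shows "Bsum N r p \<le> real (r + 1) * (max 1 (real N * p)) ^ r * (1 - p) ^ (N - r)"
proof -
  have "Bsum N r p \<le> (\<Sum>a\<le>r. (max 1 (real N * p)) ^ r * (1 - p) ^ (N - r))"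
    unfolding Bsum_def
  proof (rule sum_mono)
    fix a assume a: "a \<in> {..r}"
    have "real (N choose a) * p ^ a \<le> real N ^ a * p ^ a"
      using a assms binomial_le_pow[of a N] by (intro mult_right_mono) (auto simp del: of_nat_power simp: of_nat_power[symmetric])
    also have "\<dots> = (real N * p) ^ a" by (simp add: power_mult_distrib)
    also have "\<dots> \<le> (max 1 (real N * p)) ^ a" using assms by (intro power_mono) auto
    also have "\<dots> \<le> (max 1 (real N * p)) ^ r" using a by (intro power_increasing) auto
    finally have 1: "real (N choose a) * p ^ a \<le> (max 1 (real N * p)) ^ r" .
    have 2: "(1 - p) ^ (N - a) \<le> (1 - p) ^ (N - r)" using a assms by (intro power_decreasing) auto
    show "real (N choose a) * p ^ a * (1 - p) ^ (N - a) \<le> (max 1 (real N * p)) ^ r * (1 - p) ^ (N - r)"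
      using 1 2 assms by (intro mult_mono) auto
  qed
  also have "\<dots> = real (r + 1) * (max 1 (real N * p)) ^ r * (1 - p) ^ (N - r)" by simp
  finally show ?thesis .
qed



lemma main_bound:
  assumes "1 \<le> m" "m + r \<le> n" "1 \<le> X" "X \<le> Y"
  shows "measure_pmf.prob (rkg n X Y) {S. card (\<Union>i\<in>{1..m}. nbr_set n m S i) \<le> r}
     \<le> real (r + 1) * (max 1 (real n * real m * (real X * real X / real Y))) ^ r *
        (exp (- real (n - m - r) * Hs X Y) ^ (m * X) *
         (1 + (1 / exp (- real (n - m - r) * Hs X Y) - 1) * (real X / real Y)) ^ (m * X * m))"
proof -
  define U where "U = pmf_of_set (key_rings X Y)"
  define K where "K = key_rings X Y"
  define H where "H = Hs X Y"
  define \<rho> where "\<rho> = exp (- real (n - m - r) * H)"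
  define \<gamma> where "\<gamma> = 1 + (1 / \<rho> - 1) * (real X / real Y)"
  define M where "M = max 1 (real n * real m * (real X * real X / real Y))"
  define C where "C = real (r + 1) * M ^ r"
  have Y0: "0 < Y" using assms by simp
  have H0: "0 \<le> H" using Hs_ge[OF assms(4)] unfolding H_def by (smt (verit) divide_nonneg_nonneg of_nat_0_le_iff)
  have r0: "0 < \<rho>" "\<rho> \<le> 1" using H0 by (auto simp: \<rho>_def)
  have M1: "1 \<le> M" by (simp add: M_def)
  have "1 \<le> 1 / \<rho>" using r0 by simp
  then have g1: "1 \<le> \<gamma>" unfolding \<gamma>_def by (simp add: mult_nonneg_nonneg)
  have C0: "0 \<le> C" using M1 by (simp add: C_def)
  have cK: "0 < real (Y choose X)" using assms by simp
  have pw: "Bsum (n - m) r (measure_pmf.prob U {s. s \<inter> (\<Union>i<m. f i) \<noteq> {}}) \<le> C * \<rho> ^ card ({} \<union> (\<Union>i<m. f i))"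
    if f: "f \<in> set_pmf (Pi_pmf {..<m} {} (\<lambda>_. U))" for f
  proof -
    define T where "T = (\<Union>i<m. f i)"
    define p where "p = measure_pmf.prob U {s. s \<inter> T \<noteq> {}}"
    have fi: "f i \<in> K" if "i < m" for i
      using f that set_Pi_pmf[of "{..<m}" "{}" "\<lambda>_. U"] set_pmf_U[OF assms(4)]
      by (auto simp: PiE_dflt_def U_def K_def)
    have TY: "T \<subseteq> {..<Y}" using fi key_rings_memD by (force simp: T_def K_def)
    have fT: "finite T" using TY finite_subset by blast
    have tY: "card T \<le> Y" using card_mono[OF _ TY] by simp
    have tm: "card T \<le> m * X"
    proof -
      have "card T \<le> (\<Sum>i<m. card (f i))" unfolding T_def by (rule card_UN_le) simp
      also have "\<dots> = (\<Sum>i<m. X)" using fi key_rings_memD by (intro sum.cong) (auto simp: K_def)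
      finally show ?thesis by simp
    qed
    have p01: "0 \<le> p" "p \<le> 1" by (auto simp: p_def)
    have pl: "p \<le> real (card T) * (real X / real Y)"
      unfolding p_def U_def using meet_le[OF TY assms(4) Y0] .
    have "Bsum (n - m) r p \<le> real (r + 1) * (max 1 (real (n - m) * p)) ^ r * (1 - p) ^ (n - m - r)"
      using Bsum_le[of r "n - m" p] assms p01 by simp
    also have "\<dots> \<le> C * \<rho> ^ card T"
    proof -
      have "real (n - m) * p \<le> real n * (real (m * X) * (real X / real Y))"
      proof (rule mult_mono)
        have "real (card T) * (real X / real Y) \<le> real (m * X) * (real X / real Y)"
          using tm by (intro mult_right_mono) (simp only: of_nat_le_iff, simp)
        then show "p \<le> real (m * X) * (real X / real Y)" using pl by linarith
      qed (use p01 in auto)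
      then have "max 1 (real (n - m) * p) \<le> M" by (simp add: M_def algebra_simps)
      then have a: "(max 1 (real (n - m) * p)) ^ r \<le> M ^ r" by (intro power_mono) auto
      have "1 - p = real ((Y - card T) choose X) / real (Y choose X)"
        unfolding p_def U_def by (rule avoid_prob[OF TY assms(4)])
      also have "\<dots> \<le> exp (- real (card T) * H)"
        using avoid_exp[OF tY assms(4)] cK by (simp add: H_def divide_simps mult_ac)
      finally have "(1 - p) ^ (n - m - r) \<le> exp (- real (card T) * H) ^ (n - m - r)"
        using p01 by (intro power_mono) auto
      also have "\<dots> = \<rho> ^ card T"
        by (simp add: \<rho>_def exp_of_nat_mult[symmetric] power_mult[symmetric] mult_ac)
      finally have b: "(1 - p) ^ (n - m - r) \<le> \<rho> ^ card T" .
      show ?thesis unfolding C_def using a b p01 M1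
        by (intro mult_mono) auto
    qed
    finally show ?thesis by (simp add: T_def p_def)
  qed
  have "ennreal (measure_pmf.prob (rkg n X Y) {S. card (\<Union>i\<in>{1..m}. nbr_set n m S i) \<le> r})
      = emeasure (rkg n X Y) {S. card (\<Union>i\<in>{1..m}. nbr_set n m S i) \<le> r}"
    by (simp add: measure_pmf.emeasure_eq_measure)
  also have "\<dots> = (\<integral>\<^sup>+f. ennreal (Bsum (n - m) r (measure_pmf.prob U {s. s \<inter> (\<Union>i<m. f i) \<noteq> {}})) \<partial>Pi_pmf {..<m} {} (\<lambda>_. U))"
    unfolding U_def by (rule decomp) (use assms in simp)
  also have "\<dots> \<le> (\<integral>\<^sup>+f. ennreal C * ennreal (\<rho> ^ card ({} \<union> (\<Union>i<m. f i))) \<partial>Pi_pmf {..<m} {} (\<lambda>_. U))"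
  proof (rule nn_integral_mono_AE, rule AE_pmfI)
    fix f assume "f \<in> set_pmf (Pi_pmf {..<m} {} (\<lambda>_. U))"
    from pw[OF this] show "ennreal (Bsum (n - m) r (measure_pmf.prob U {s. s \<inter> (\<Union>i<m. f i) \<noteq> {}}))
        \<le> ennreal C * ennreal (\<rho> ^ card ({} \<union> (\<Union>i<m. f i)))"
      using r0 by (simp add: ennreal_mult''[symmetric] ennreal_leI)
  qed
  also have "\<dots> = ennreal C * (\<integral>\<^sup>+f. ennreal (\<rho> ^ card ({} \<union> (\<Union>i<m. f i))) \<partial>Pi_pmf {..<m} {} (\<lambda>_. U))"
    by (rule nn_integral_cmult) simp
  also have "\<dots> \<le> ennreal C * ennreal (\<rho> ^ (card ({}::nat set) + m * X) * \<gamma> ^ ((card ({}::nat set) + m * X) * m))"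
  proof (rule mult_left_mono)
    show "(\<integral>\<^sup>+f. ennreal (\<rho> ^ card ({} \<union> (\<Union>i<m. f i))) \<partial>Pi_pmf {..<m} {} (\<lambda>_. U))
        \<le> ennreal (\<rho> ^ (card ({}::nat set) + m * X) * \<gamma> ^ ((card ({}::nat set) + m * X) * m))"
      unfolding U_def \<gamma>_def by (rule overlap[OF r0 assms(4) Y0]) simp
  qed simp
  also have "\<dots> = ennreal (C * (\<rho> ^ (m * X) * \<gamma> ^ (m * X * m)))"
    using C0 by (simp add: ennreal_mult')
  finally have "measure_pmf.prob (rkg n X Y) {S. card (\<Union>i\<in>{1..m}. nbr_set n m S i) \<le> r} \<le> C * (\<rho> ^ (m * X) * \<gamma> ^ (m * X * m))"
    using C0 r0 g1 by (subst (asm) ennreal_le_iff) (auto intro!: mult_nonneg_nonneg)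
  then show ?thesis by (simp add: C_def M_def \<rho>_def \<gamma>_def H_def)
qed



definition Phi :: "nat \<Rightarrow> real \<Rightarrow> real" where
  "Phi n q = exp (real n * (- ln (1 - q)) / (2 - (- ln (1 - q)))) * (- ln (1 - q))"

lemma edge_facts:
  assumes "2 \<le> X" "X \<le> Y" "0 < rkg_edge_prob X Y" "rkg_edge_prob X Y \<le> 1/2"
  defines "q \<equiv> rkg_edge_prob X Y" and "u \<equiv> real X * real X / real Y" and "lq \<equiv> - ln (1 - rkg_edge_prob X Y)"
  shows "q \<le> u" "u \<le> lq" "lq \<le> 2 * q" "q \<le> real X * Hs X Y" "X < Y"
        "Hs X Y \<le> lq / (2 - lq)"
proof -
  have Y0: "0 < Y" using assms by simp
  have XY: "{..<X} \<subseteq> {..<Y}" using assms by auto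
  have cK: "0 < real (Y choose X)" using assms by simp
  have qm: "q = measure_pmf.prob (pmf_of_set (key_rings X Y)) {s. s \<inter> {..<X} \<noteq> {}}"
    using avoid_prob[OF XY assms(2)] by (simp add: q_def rkg_edge_prob_def)
  show qu: "q \<le> u" using meet_le[OF XY assms(2) Y0] qm by (simp add: u_def)
  have H: "real X / real Y \<le> Hs X Y" by (rule Hs_ge[OF assms(2)])
  have uH: "u \<le> real X * Hs X Y"
    using mult_left_mono[OF H, of "real X"] by (simp add: u_def)
  show "q \<le> real X * Hs X Y" using qu uH by linarith
  have "1 - q \<le> exp (- real X * Hs X Y)"
    using avoid_exp[OF assms(2) assms(2)] cK by (simp add: q_def rkg_edge_prob_def divide_simps mult_ac)
  also have "\<dots> \<le> exp (- u)" using uH by simp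
  finally have "1 - q \<le> exp (- u)" .
  moreover have "0 < 1 - q" using assms(4) q_def by simp
  ultimately have "ln (1 - q) \<le> - u" by (metis ln_exp ln_le_cancel_iff exp_gt_zero)
  then show ul: "u \<le> lq" by (simp add: lq_def q_def)
  have "- q - 2 * q\<^sup>2 \<le> ln (1 - q)" using assms by (intro ln_one_minus_pos_lower_bound) (auto simp: q_def)
  moreover have "q\<^sup>2 \<le> q / 2" using assms by (simp add: power2_eq_square q_def mult_left_le_one_le)
  ultimately show l2: "lq \<le> 2 * q" by (simp add: lq_def q_def)
  have u1: "u \<le> 1" using ul l2 assms q_def by linarith
  then have "real X * real X \<le> real Y" using Y0 by (simp add: u_def divide_simps)
  moreover have "2 * real X \<le> real X * real X" using assms by (intro mult_right_mono) auto
  ultimately show XltY: "X < Y" using assms by linarith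
  have "Hs X Y \<le> real X / (real Y - real X)" by (rule Hs_le[OF XltY])
  also have "\<dots> \<le> u / (2 - u)"
  proof -
    have a: "0 < real Y - real X" using XltY by simp
    have b: "0 < 2 - u" using u1 by simp
    have "2 * real Y \<le> real X * real Y" using assms by (intro mult_right_mono) auto
    then have "real X * (2 * real Y) \<le> real X * (real X * real Y)"
      by (intro mult_left_mono) auto
    then have "real X * (2 * real Y - real X * real X) \<le> real X * real X * (real Y - real X)"
      by (simp add: algebra_simps)
    then have "real X * (2 - u) \<le> u * (real Y - real X)"
      using Y0 by (simp add: u_def divide_simps algebra_simps)
    then show ?thesis using a b by (simp add: divide_simps mult_ac)
  qed
  also have "\<dots> \<le> lq / (2 - lq)"
  proof -
    have "lq \<le> 1" using l2 assms q_def by linarith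
    then have c: "0 < 2 - lq" by simp
    have b: "0 < 2 - u" using u1 by simp
    have "u * (2 - lq) \<le> lq * (2 - u)" using ul by (simp add: algebra_simps)
    then show ?thesis using b c by (simp add: divide_simps)
  qed
  finally show "Hs X Y \<le> lq / (2 - lq)" .
qed


lemma pointwise:
  assumes "1 \<le> m" "m + r \<le> n" "2 \<le> X" "X \<le> Y" "0 < rkg_edge_prob X Y" "rkg_edge_prob X Y \<le> 1/2"
    "real ((m + r) * m) * rkg_edge_prob X Y \<le> 1" "1 \<le> real n * rkg_edge_prob X Y"
    "real m ^ 2 * Phi n (rkg_edge_prob X Y) \<le> 1"
  shows "measure_pmf.prob (rkg n X Y) {S. card (\<Union>i\<in>{1..m}. nbr_set n m S i) \<le> r}
     \<le> real (r + 1) * (2 * real m) ^ r * exp 2 * (real n * rkg_edge_prob X Y) ^ r * exp (- real m * real n * rkg_edge_prob X Y)"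
proof -
  define q where "q = rkg_edge_prob X Y"
  define u where "u = real X * real X / real Y"
  define lq where "lq = - ln (1 - q)"
  define H where "H = Hs X Y"
  define N' where "N' = n - m - r"
  define \<rho> where "\<rho> = exp (- real N' * H)"
  define \<gamma> where "\<gamma> = 1 + (1 / \<rho> - 1) * (real X / real Y)"
  define M where "M = max 1 (real n * real m * u)"
  note ef = edge_facts[OF assms(3,4,5,6), folded q_def u_def, unfolded q_def[symmetric], folded lq_def H_def]
  have Y0: "0 < Y" using assms by simp
  have q0: "0 < q" using assms q_def by simp
  have u0: "0 \<le> u" by (simp add: u_def)
  have H0: "0 \<le> H" using Hs_ge[OF assms(4)] unfolding H_def by (smt (verit) divide_nonneg_nonneg of_nat_0_le_iff)
  have N'r: "real N' = real n - real m - real r" using assms by (simp add: N'_def)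
  have r0: "0 < \<rho>" by (simp add: \<rho>_def)
  have ir: "1 / \<rho> = exp (real N' * H)" by (simp add: \<rho>_def exp_minus field_simps)
  have "1 \<le> 1 / \<rho>" unfolding ir using H0 by simp
  then have g1: "1 \<le> \<gamma>" unfolding \<gamma>_def by (simp add: mult_nonneg_nonneg)
  have M1: "1 \<le> M" by (simp add: M_def)
  have "measure_pmf.prob (rkg n X Y) {S. card (\<Union>i\<in>{1..m}. nbr_set n m S i) \<le> r}
     \<le> real (r + 1) * M ^ r * (\<rho> ^ (m * X) * \<gamma> ^ (m * X * m))"
    using main_bound[of m r n X Y] assms by (simp add: M_def u_def \<rho>_def \<gamma>_def N'_def H_def)
  also have "\<dots> \<le> real (r + 1) * (2 * real m * (real n * q)) ^ r * (exp (- real m * real n * q) * exp 1 * exp 1)"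
  proof (intro mult_mono mult_nonneg_nonneg)
    have "real n * real m * u \<le> real n * real m * (2 * q)"
      using ef q0 by (intro mult_left_mono) auto
    moreover have "1 \<le> 2 * real m * (real n * q)"
    proof -
      have "1 \<le> real n * q" using assms q_def by simp
      also have "\<dots> \<le> 2 * real m * (real n * q)"
        using mult_right_mono[of 1 "2 * real m" "real n * q"] assms q0 by simp
      finally show ?thesis .
    qed
    ultimately have "M \<le> 2 * real m * (real n * q)" by (simp add: M_def mult_ac)
    then show "M ^ r \<le> (2 * real m * (real n * q)) ^ r" by (intro power_mono) (auto simp: M_def)
    have "\<rho> ^ (m * X) = exp (- (real N' * (real m * (real X * H))))"
      by (simp add: \<rho>_def exp_of_nat_mult[symmetric] mult_ac)
    also have "\<dots> \<le> exp (- (real N' * (real m * q)))"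
      using ef q0 by (intro exp_mono le_imp_neg_le mult_left_mono) auto
    also have "- (real N' * (real m * q)) = - real m * real n * q + real ((m + r) * m) * q"
      by (simp add: N'r algebra_simps)
    also have "exp \<dots> \<le> exp (- real m * real n * q) * exp 1"
      using assms q_def by (simp add: exp_add[symmetric])
    finally show "\<rho> ^ (m * X) \<le> exp (- real m * real n * q) * exp 1" .
    have "\<gamma> \<le> exp ((1 / \<rho> - 1) * (real X / real Y))"
      unfolding \<gamma>_def by (rule exp_ge_add_one_self)
    then have "\<gamma> ^ (m * X * m) \<le> exp ((1 / \<rho> - 1) * (real X / real Y)) ^ (m * X * m)"
      using g1 by (intro power_mono) auto
    also have "\<dots> = exp (real m ^ 2 * ((1 / \<rho> - 1) * u))"
      by (simp add: exp_of_nat_mult[symmetric] u_def power2_eq_square mult_ac)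
    also have "\<dots> \<le> exp (real m ^ 2 * Phi n q)"
    proof (intro exp_mono mult_left_mono)
      have "real N' * H \<le> real n * (lq / (2 - lq))"
        using ef H0 by (intro mult_mono) (auto simp: N'_def)
      then have "1 / \<rho> \<le> exp (real n * lq / (2 - lq))" unfolding ir by simp
      moreover have "u \<le> lq" using ef by simp
      ultimately have "1 / \<rho> * u \<le> exp (real n * lq / (2 - lq)) * lq"
        using u0 by (intro mult_mono) auto
      then show "(1 / \<rho> - 1) * u \<le> Phi n q" using u0
        by (simp add: Phi_def lq_def algebra_simps)
    qed simp
    also have "\<dots> \<le> exp 1" using assms q_def by simp
    finally show "\<gamma> ^ (m * X * m) \<le> exp 1" .
  qed (use M1 g1 q0 r0 in auto)
  also have "\<dots> = real (r + 1) * (2 * real m) ^ r * exp 2 * (real n * q) ^ r * exp (- real m * real n * q)"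
    by (simp add: power_mult_distrib exp_add[symmetric] mult_ac)
  finally show ?thesis by (simp add: q_def)
qed



lemma Phi_mono:
  assumes "0 \<le> q" "q \<le> q'" "q' \<le> 1/2"
  shows "Phi n q \<le> Phi n q'"
proof -
  define a where "a = - ln (1 - q)"
  define b where "b = - ln (1 - q')"
  have a0: "0 \<le> a" using assms by (simp add: a_def)
  have ab: "a \<le> b" using assms by (simp add: a_def b_def)
  have "- q' - 2 * q'\<^sup>2 \<le> ln (1 - q')" using assms by (intro ln_one_minus_pos_lower_bound) auto
  moreover have "q' * (2 * q') \<le> q' * 1" using assms by (intro mult_left_mono) auto
  then have "q'\<^sup>2 \<le> q' / 2" by (simp add: power2_eq_square)
  ultimately have b1: "b \<le> 1" using assms by (simp add: b_def)
  have "a / (2 - a) \<le> b / (2 - b)"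
  proof -
    have "a * (2 - b) \<le> b * (2 - a)" using ab by (simp add: algebra_simps)
    then show ?thesis using ab b1 by (simp add: divide_simps)
  qed
  then have "real n * a / (2 - a) \<le> real n * b / (2 - b)"
    using mult_left_mono[of "a / (2 - a)" "b / (2 - b)" "real n"] by simp
  then have "exp (real n * a / (2 - a)) * a \<le> exp (real n * b / (2 - b)) * b"
    using a0 ab by (intro mult_mono) auto
  then show ?thesis by (simp add: Phi_def a_def b_def)
qed

lemma ev1: "eventually (\<lambda>n::nat. 1 \<le> 3/4 * ln (real n)) at_top" by real_asymp
lemma ev2: "((\<lambda>n::nat. 3/2 * ln (real n) / real n) \<longlongrightarrow> 0) at_top" by real_asymp
lemma ev3: "((\<lambda>n::nat. Phi n (3/2 * ln (real n) / real n)) \<longlongrightarrow> 0) at_top"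
  unfolding Phi_def by real_asymp
lemma ev4: "(\<lambda>n. ln (ln (real n))) \<in> o(\<lambda>n. ln (real n))" by real_asymp
lemma ev5: "filterlim (\<lambda>n::nat. ln (real n)) at_top at_top" by real_asymp
lemma ev6: "eventually (\<lambda>n::nat. 1 \<le> ln (ln (real n))) at_top" by real_asymp



theorem mainTheorem8:
  fixes k m h :: nat and X Y :: "nat \<Rightarrow> nat" and \<alpha> :: "nat \<Rightarrow> real"
  assumes "k \<ge> 1" and "m \<ge> 1"
    and "\<And>n. 1 \<le> X n" and "\<And>n. X n \<le> Y n"
    and "eventually (\<lambda>n. X n \<ge> 2) sequentially"
    and "eventually (\<lambda>n. rkg_edge_prob (X n) (Y n)
            = (ln (real n) + (real k - 1) * ln (ln (real n)) + \<alpha> n) / real n) sequentially"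
    and "\<alpha> \<in> o(\<lambda>n. ln (real n))"
  shows "(\<lambda>n. measure_pmf.prob (rkg n (X n) (Y n))
            {S. int (card (\<Union>i\<in>{1..m}. nbr_set n m S i)) \<le> int h * int m - 1})
         \<in> o(\<lambda>n. (real n * rkg_edge_prob (X n) (Y n)) ^ (h * m)
                  * exp (- real m * real n * rkg_edge_prob (X n) (Y n)))"
proof (cases "h = 0")
  case True
  then have "(\<lambda>n. measure_pmf.prob (rkg n (X n) (Y n))
            {S. int (card (\<Union>i\<in>{1..m}. nbr_set n m S i)) \<le> int h * int m - 1}) = (\<lambda>n. 0)"
    by simp
  then show ?thesis by (simp add: landau_o.smallI)
next
  case False
  define r where "r = h * m - 1"
  have hm: "h * m = r + 1" using False assms(2) by (simp add: r_def)
  have ev_set: "{S. int (card (\<Union>i\<in>{1..m}. nbr_set n m S i)) \<le> int h * int m - 1}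
      = {S. card (\<Union>i\<in>{1..m}. nbr_set n m S i) \<le> r}" for n
  proof -
    have "int h * int m - 1 = int r" using hm by (simp add: of_nat_mult[symmetric])
    then show ?thesis by auto
  qed
  define q where "q = (\<lambda>n. rkg_edge_prob (X n) (Y n))"
  define D where "D = real (r + 1) * (2 * real m) ^ r * exp 2"
  have D0: "0 \<le> D" by (simp add: D_def)
  show ?thesis unfolding ev_set hm
  proof (rule landau_o.smallI)
    fix c :: real assume c: "0 < c"
    have a1: "eventually (\<lambda>n. norm (\<alpha> n) \<le> 1/4 * norm (ln (real n))) sequentially"
      by (rule landau_o.smallD[OF assms(7)]) simp
    have a2: "eventually (\<lambda>n. norm (ln (ln (real n))) \<le> 1 / (4 * (real k + 1)) * norm (ln (real n))) sequentially"
      by (rule landau_o.smallD[OF ev4]) simp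
    have a3: "eventually (\<lambda>n. 3/2 * ln (real n) / real n < min (1/2) (1 / real ((m + r) * m))) sequentially"
      using order_tendstoD(2)[OF ev2, of "min (1/2) (1 / real ((m + r) * m))"] assms(2) by simp
    have a4: "eventually (\<lambda>n. Phi n (3/2 * ln (real n) / real n) < 1 / real m ^ 2) sequentially"
      using order_tendstoD(2)[OF ev3, of "1 / real m ^ 2"] assms(2) by simp
    have a5: "eventually (\<lambda>n. D / c \<le> 3/4 * ln (real n)) sequentially"
      using ev5 unfolding filterlim_at_top
      by (rule allE[where x = "4/3 * (D / c)"]) (auto elim!: eventually_mono simp: field_simps c)
    have a6: "eventually (\<lambda>n. m + r \<le> n) sequentially" by (rule eventually_ge_at_top)
    from assms(5) assms(6) a1 a2 a3 a4 a5 a6 ev1 ev6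
    show "eventually (\<lambda>n. norm (measure_pmf.prob (rkg n (X n) (Y n)) {S. card (\<Union>i\<in>{1..m}. nbr_set n m S i) \<le> r})
      \<le> c * norm ((real n * rkg_edge_prob (X n) (Y n)) ^ (r + 1) * exp (- real m * real n * rkg_edge_prob (X n) (Y n)))) sequentially"
    proof eventually_elim
      case (elim n)
      define L where "L = real n * q n"
      have lnn: "1 \<le> ln (real n)" using elim by linarith
      have n0: "0 < real n"
      proof (rule ccontr)
        assume "\<not> 0 < real n"
        then have "n = 0" by simp
        then show False using lnn by simp
      qed
      have L: "L = ln (real n) + (real k - 1) * ln (ln (real n)) + \<alpha> n"
        using elim n0 by (simp add: L_def q_def)
      have k1: "0 \<le> real k - 1" using assms by simp
      have ll0: "0 \<le> ln (ln (real n))" using elim by simp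
      have t1: "(real k - 1) * ln (ln (real n)) \<le> ln (real n) / 4"
      proof -
        have "(real k - 1) * ln (ln (real n)) \<le> (real k + 1) * (1 / (4 * (real k + 1)) * ln (real n))"
          using elim ll0 lnn k1 by (intro mult_mono) auto
        moreover have "(real k + 1) * (1 / (4 * (real k + 1)) * ln (real n)) = ln (real n) / 4"
          by (simp add: field_simps)
        ultimately show ?thesis by linarith
      qed
      have t2: "0 \<le> (real k - 1) * ln (ln (real n))" using k1 ll0 by simp
      have t3: "\<bar>\<alpha> n\<bar> \<le> ln (real n) / 4" using elim lnn by simp
      have Llo: "3/4 * ln (real n) \<le> L" using L t2 t3 by linarith
      have Lhi: "L \<le> 3/2 * ln (real n)" using L t1 t3 by linarith
      have qL: "q n = L / real n" using n0 by (simp add: L_def)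
      have qpos: "0 < q n" using Llo lnn n0 qL by simp
      have qhi: "q n \<le> 3/2 * ln (real n) / real n" unfolding qL using Lhi n0 by (intro divide_right_mono) auto
      have q12: "q n \<le> 1/2" using qhi elim by linarith
      have qmr: "real ((m + r) * m) * q n \<le> 1"
      proof -
        have "q n \<le> 1 / real ((m + r) * m)" using qhi elim by linarith
        moreover have A0: "0 < real ((m + r) * m)" using assms(2) by simp
        ultimately show ?thesis using mult_left_mono[of "q n" "1 / real ((m + r) * m)" "real ((m + r) * m)"]
          by (simp del: of_nat_mult)
      qed
      have nq1: "1 \<le> real n * q n" using Llo elim by (simp add: L_def)
      have ph: "real m ^ 2 * Phi n (q n) \<le> 1"
      proof -
        have "Phi n (q n) \<le> Phi n (3/2 * ln (real n) / real n)"
          using qpos qhi elim by (intro Phi_mono) auto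
        also have "\<dots> \<le> 1 / real m ^ 2" using elim by simp
        finally show ?thesis using assms(2) by (simp add: field_simps)
      qed
      have P: "measure_pmf.prob (rkg n (X n) (Y n)) {S. card (\<Union>i\<in>{1..m}. nbr_set n m S i) \<le> r}
          \<le> D * L ^ r * exp (- real m * real n * q n)"
        using pointwise[of m r n "X n" "Y n"] assms(2,4) elim qpos q12 qmr nq1 ph
        by (simp add: q_def D_def L_def mult_ac)
      have "D * L ^ r * exp (- real m * real n * q n) \<le> c * (L ^ (r + 1) * exp (- real m * real n * q n))"
      proof -
        have "D / c \<le> 3/4 * ln (real n)" using elim by simp
        then have "D \<le> c * (3/4 * ln (real n))" using c by (simp add: field_simps)
        moreover have "c * (3/4 * ln (real n)) \<le> c * L" using Llo c by (intro mult_left_mono) auto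
        ultimately have "D \<le> c * L" by linarith
        then have "D * L ^ r \<le> c * L * L ^ r" using Llo lnn by (intro mult_right_mono) auto
        then have "D * L ^ r * exp (- real m * real n * q n) \<le> c * L * L ^ r * exp (- real m * real n * q n)"
          by (rule mult_right_mono) simp_all
        then show ?thesis by (simp add: mult_ac)
      qed
      then have B: "measure_pmf.prob (rkg n (X n) (Y n)) {S. card (\<Union>i\<in>{1..m}. nbr_set n m S i) \<le> r}
          \<le> c * (L ^ (r + 1) * exp (- real m * real n * q n))" using P by linarith
      have g0: "0 \<le> L ^ (r + 1) * exp (- real m * real n * q n)" using Llo lnn by simp
      have "norm (measure_pmf.prob (rkg n (X n) (Y n)) {S. card (\<Union>i\<in>{1..m}. nbr_set n m S i) \<le> r})
          \<le> c * norm (L ^ (r + 1) * exp (- real m * real n * q n))"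
        using B g0 by simp
      then show ?case by (simp add: L_def q_def)
    qed
  qed
qed


end
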